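(* Assume the standing setup below with $0<T_2<T_1<1$ and $\sum_m mQ(m)>0$. Then: (i) for every $q\in[0,1]$ with $\psi(q)\in(0,1)$ (where $\psi<1$), $\psi$ is differentiable at $q$ with $\frac{d\psi}{dq}>0$; and (ii) $\frac{d\tilde\nu}{dq}<0$ for all $q\in[0,1]$. Here $q=\frac{1}{\langle k\rangle}\sum_{k\ge1}k\phi(k)P(k)$ for a training profile $\phi:\{1,2,\dots\}\to[0,1]$, so in particular for fixed $T_2$ the outbreak constraint $1-\psi\le\gamma$ is equivalent to a lower bound on the linear functional $\frac{1}{\langle k\rangle}\sum_k k\phi(k)P(k)$.
   Context: Standing setup. $P$ is a probability distribution on $\{0,1,\dots,k_{\max}\}$ with mean $\langle k\rangle=\sum_k kP(k)>0$; $Q(k)=(k+1)P(k+1)/\langle k\rangle$ for $k\ge0$. Fix $T_1,T_2\in(0,1)$. For $q\in[0,1]$ set $P_q(k_1,k_2)=\binom{k_1+k_2}{k_2}q^{k_2}(1-q)^{k_1}P(k_1+k_2)$ and $Q_q(k_1,k_2)=\binom{k_1+k_2}{k_2}q^{k_2}(1-q)^{k_1}Q(k_1+k_2)$ (with $0^0=1$). Define $\tilde\nu(q)=T_1\sum_{k_1,k_2}k_1Q_q(k_1,k_2)+T_2\sum_{k_1,k_2}k_2Q_q(k_1,k_2)$. For $u\in[0,1]$ let $F_q(u)=\sum_{k_1,k_2}(1+(u-1)T_1)^{k_1}(1+(u-1)T_2)^{k_2}Q_q(k_1,k_2)$ and $G_q(u)=\sum_{k_1,k_2}(1+(u-1)T_1)^{k_1}(1+(u-1)T_2)^{k_2}P_q(k_1,k_2)$.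 Let $u^*(q)$ be the smallest solution in $[0,1]$ of $u=F_q(u)$ and $\psi(q)=G_q(u^*(q))$. *)

theory Defs
  imports "HOL-Analysis.Analysis"
begin

text \<open>P is a degree distribution on {0..kmax}, given as a function nat => real
  (with P k = 0 for k > kmax). All double sums over (k1,k2) range over
  {..kmax} x {..kmax}, which contains the whole (finite) support.\<close>

definition meandeg :: "(nat \<Rightarrow> real) \<Rightarrow> nat \<Rightarrow> real" where
  "meandeg P kmax = (\<Sum>k\<le>kmax. real k * P k)"

definition Qd :: "(nat \<Rightarrow> real) \<Rightarrow> nat \<Rightarrow> nat \<Rightarrow> real" where
  "Qd P kmax k = real (k + 1) * P (k + 1) / meandeg P kmax"

definition Pq :: "(nat \<Rightarrow> real) \<Rightarrow> real \<Rightarrow> nat \<Rightarrow> nat \<Rightarrow> real" where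
  "Pq P q k1 k2 = real ((k1 + k2) choose k2) * q ^ k2 * (1 - q) ^ k1 * P (k1 + k2)"

definition Qq :: "(nat \<Rightarrow> real) \<Rightarrow> nat \<Rightarrow> real \<Rightarrow> nat \<Rightarrow> nat \<Rightarrow> real" where
  "Qq P kmax q k1 k2 = real ((k1 + k2) choose k2) * q ^ k2 * (1 - q) ^ k1 * Qd P kmax (k1 + k2)"

definition nu_tilde :: "(nat \<Rightarrow> real) \<Rightarrow> nat \<Rightarrow> real \<Rightarrow> real \<Rightarrow> real \<Rightarrow> real" where
  "nu_tilde P kmax T1 T2 q =
     T1 * (\<Sum>k1\<le>kmax. \<Sum>k2\<le>kmax. real k1 * Qq P kmax q k1 k2)
   + T2 * (\<Sum>k1\<le>kmax. \<Sum>k2\<le>kmax. real k2 * Qq P kmax q k1 k2)"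

definition Fq :: "(nat \<Rightarrow> real) \<Rightarrow> nat \<Rightarrow> real \<Rightarrow> real \<Rightarrow> real \<Rightarrow> real \<Rightarrow> real" where
  "Fq P kmax T1 T2 q u =
     (\<Sum>k1\<le>kmax. \<Sum>k2\<le>kmax. (1 + (u - 1) * T1) ^ k1 * (1 + (u - 1) * T2) ^ k2 * Qq P kmax q k1 k2)"

definition Gq :: "(nat \<Rightarrow> real) \<Rightarrow> nat \<Rightarrow> real \<Rightarrow> real \<Rightarrow> real \<Rightarrow> real \<Rightarrow> real" where
  "Gq P kmax T1 T2 q u =
     (\<Sum>k1\<le>kmax. \<Sum>k2\<le>kmax. (1 + (u - 1) * T1) ^ k1 * (1 + (u - 1) * T2) ^ k2 * Pq P q k1 k2)"

definition ustar :: "(nat \<Rightarrow> real) \<Rightarrow> nat \<Rightarrow> real \<Rightarrow> real \<Rightarrow> real \<Rightarrow> real" where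
  "ustar P kmax T1 T2 q = Inf {u \<in> {0..1}. u = Fq P kmax T1 T2 q u}"

definition psi :: "(nat \<Rightarrow> real) \<Rightarrow> nat \<Rightarrow> real \<Rightarrow> real \<Rightarrow> real \<Rightarrow> real" where
  "psi P kmax T1 T2 q = Gq P kmax T1 T2 q (ustar P kmax T1 T2 q)"

end

theory Submission imports Defs begin

lemma box_tri:
  fixes f :: "nat \<Rightarrow> nat \<Rightarrow> real"
  assumes "\<And>i j. n < i + j \<Longrightarrow> f i j = 0"
  shows "(\<Sum>k1\<le>n. \<Sum>k2\<le>n. f k1 k2) = (\<Sum>k\<le>n. \<Sum>i\<le>k. f i (k - i))"
proof -
  have "(\<Sum>k1\<le>n. \<Sum>k2\<le>n. f k1 k2) = (\<Sum>(i,j)\<in>{..n}\<times>{..n}. f i j)"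
    by (simp add: sum.cartesian_product)
  also have "\<dots> = (\<Sum>(i,j)\<in>{(i,j). i+j \<le> n}. f i j)"
  proof (rule sum.mono_neutral_right)
    show "finite ({..n}\<times>{..n})" by simp
    show "{(i, j). i + j \<le> n} \<subseteq> {..n} \<times> {..n}" by auto
    show "\<forall>x\<in>{..n} \<times> {..n} - {(i, j). i + j \<le> n}. (case x of (i, j) \<Rightarrow> f i j) = 0"
      using assms by (force simp: not_le[symmetric])
  qed
  also have "\<dots> = (\<Sum>k\<le>n. \<Sum>i\<le>k. f i (k - i))"
    by (rule sum.triangle_reindex_eq)
  finally show ?thesis .
qed

lemma binom_box:
  fixes c :: "nat \<Rightarrow> real" and a b :: real
  assumes "\<And>k. n < k \<Longrightarrow> c k = 0"
  shows "(\<Sum>k1\<le>n. \<Sum>k2\<le>n. real ((k1+k2) choose k2) * a^k1 * b^k2 * c (k1+k2))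
       = (\<Sum>k\<le>n. c k * (a+b)^k)"
proof -
  have "(\<Sum>k1\<le>n. \<Sum>k2\<le>n. real ((k1+k2) choose k2) * a^k1 * b^k2 * c (k1+k2))
     = (\<Sum>k\<le>n. \<Sum>i\<le>k. real ((i+(k-i)) choose (k-i)) * a^i * b^(k-i) * c (i+(k-i)))"
    by (rule box_tri) (use assms in auto)
  also have "\<dots> = (\<Sum>k\<le>n. c k * (\<Sum>i\<le>k. real (k choose i) * a^i * b^(k-i)))"
  proof (rule sum.cong[OF refl])
    fix k assume "k \<in> {..n}"
    have "(\<Sum>i\<le>k. real ((i+(k-i)) choose (k-i)) * a^i * b^(k-i) * c (i+(k-i)))
        = (\<Sum>i\<le>k. c k * (real (k choose i) * a^i * b^(k-i)))"
      by (rule sum.cong[OF refl]) (auto simp: binomial_symmetric[symmetric])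
    then show "(\<Sum>i\<le>k. real ((i+(k-i)) choose (k-i)) * a^i * b^(k-i) * c (i+(k-i)))
        = c k * (\<Sum>i\<le>k. real (k choose i) * a^i * b^(k-i))"
      by (simp add: sum_distrib_left)
  qed
  also have "\<dots> = (\<Sum>k\<le>n. c k * (a+b)^k)"
    by (simp add: binomial_ring)
  finally show ?thesis .
qed

lemma binom_mean:
  fixes a b :: real
  shows "(\<Sum>i\<le>k. real i * (real (k choose i) * a^i * b^(k-i))) = real k * a * (a+b)^(k-1)"
proof (cases k)
  case 0 then show ?thesis by simp
next
  case (Suc n)
  have "(\<Sum>i\<le>Suc n. real i * (real (Suc n choose i) * a^i * b^(Suc n-i)))
      = (\<Sum>i\<le>n. real (Suc i) * (real (Suc n choose Suc i) * a^Suc i * b^(n-i)))"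
    by (subst sum.atMost_Suc_shift) simp
  also have "\<dots> = (\<Sum>i\<le>n. real (Suc n) * a * (real (n choose i) * a^i * b^(n-i)))"
  proof (rule sum.cong[OF refl])
    fix i
    have "real (Suc i) * real (Suc n choose Suc i) = real (Suc n) * real (n choose i)"
      using Suc_times_binomial_eq[of n i] by (metis of_nat_mult mult.commute)
    then show "real (Suc i) * (real (Suc n choose Suc i) * a^Suc i * b^(n-i))
       = real (Suc n) * a * (real (n choose i) * a^i * b^(n-i))"
    proof -
      have "real (Suc i) * (real (Suc n choose Suc i) * a^Suc i * b^(n-i))
         = (real (Suc i) * real (Suc n choose Suc i)) * a * (a^i * b^(n-i))" by (simp add: algebra_simps)
      also have "\<dots> = real (Suc n) * a * (real (n choose i) * a^i * b^(n-i))"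
        unfolding \<open>real (Suc i) * real (Suc n choose Suc i) = real (Suc n) * real (n choose i)\<close>
        by (simp add: algebra_simps)
      finally show ?thesis .
    qed
  qed
  also have "\<dots> = real (Suc n) * a * (a+b)^n"
    by (simp add: binomial_ring sum_distrib_left)
  finally show ?thesis using Suc by simp
qed

lemma aux_min: "0 < (m::real) \<Longrightarrow> m \<le> s \<Longrightarrow> m \<le> 1-s \<Longrightarrow> 0 < s - m/2 \<and> s + m/2 < 1"
  by linarith

locale thm2 =
  fixes P :: "nat \<Rightarrow> real" and kmax :: nat and T1 T2 :: real
  assumes P_nonneg: "\<And>k. P k \<ge> 0"
    and P_supp: "\<And>k. k > kmax \<Longrightarrow> P k = 0"
    and P_sum: "(\<Sum>k\<le>kmax. P k) = 1"
    and mean_pos: "meandeg P kmax > 0"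
    and T2_pos: "0 < T2" and T21: "T2 < T1" and T1_lt: "T1 < 1"
    and Qmean_pos: "(\<Sum>m\<le>kmax. real m * Qd P kmax m) > 0"
begin

abbreviation "Q \<equiv> Qd P kmax"
definition "F0 x = (\<Sum>k\<le>kmax. Q k * x^k)"
definition "G0 x = (\<Sum>k\<le>kmax. P k * x^k)"
definition "Tq q = (1-q)*T1 + q*T2"
definition "mQ = (\<Sum>m\<le>kmax. real m * Q m)"
definition "R s = (\<Sum>k\<le>kmax. Q k * (\<Sum>j<k. (1-s)^j))"
definition "R' s = (\<Sum>k\<le>kmax. Q k * (\<Sum>j<k. - (real j * (1-s)^(j - Suc 0))))"
definition "G0' x = (\<Sum>k\<le>kmax. P k * (real k * x^(k - Suc 0)))"
definition "Fset T = {u \<in> {0..1}. u = F0 (1 + (u-1)*T)}"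

lemma Q_supp: "k > kmax \<Longrightarrow> Q k = 0"
  by (simp add: Qd_def P_supp)

lemma Q_nonneg: "Q k \<ge> 0"
  using mean_pos P_nonneg by (simp add: Qd_def)

lemma Q_sum: "(\<Sum>k\<le>kmax. Q k) = 1"
proof -
  have "(\<Sum>k\<le>Suc kmax. real k * P k) = meandeg P kmax"
    by (simp add: meandeg_def P_supp)
  moreover have "(\<Sum>k\<le>Suc kmax. real k * P k) = (\<Sum>k\<le>kmax. real (k+1) * P (k+1))"
    by (subst sum.atMost_Suc_shift) simp
  ultimately have "(\<Sum>k\<le>kmax. real (k+1) * P (k+1)) = meandeg P kmax" by simp
  then show ?thesis using mean_pos
    by (simp add: Qd_def sum_divide_distrib[symmetric])
qed

lemma F0_1: "F0 1 = 1" using Q_sum by (simp add: F0_def)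
lemma G0_1: "G0 1 = 1" using P_sum by (simp add: G0_def)

lemma F0_nonneg: "0 \<le> x \<Longrightarrow> 0 \<le> F0 x"
  unfolding F0_def by (intro sum_nonneg mult_nonneg_nonneg Q_nonneg zero_le_power)

lemma Fq_eq: "Fq P kmax T1 T2 q u = F0 (1 + (u-1) * Tq q)"
proof -
  have "Fq P kmax T1 T2 q u = (\<Sum>k1\<le>kmax. \<Sum>k2\<le>kmax. real ((k1+k2) choose k2)
       * ((1-q)*(1 + (u - 1) * T1))^k1 * (q*(1 + (u - 1) * T2))^k2 * Q (k1+k2))"
    unfolding Fq_def Qq_def by (intro sum.cong refl) (simp add: power_mult_distrib mult_ac)
  also have "\<dots> = (\<Sum>k\<le>kmax. Q k * ((1-q)*(1 + (u - 1) * T1) + q*(1 + (u - 1) * T2))^k)"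
    by (rule binom_box) (rule Q_supp)
  also have "(1-q)*(1 + (u - 1) * T1) + q*(1 + (u - 1) * T2) = 1 + (u-1) * Tq q"
    by (simp add: Tq_def algebra_simps)
  finally show ?thesis by (simp add: F0_def)
qed

lemma Gq_eq: "Gq P kmax T1 T2 q u = G0 (1 + (u-1) * Tq q)"
proof -
  have "Gq P kmax T1 T2 q u = (\<Sum>k1\<le>kmax. \<Sum>k2\<le>kmax. real ((k1+k2) choose k2)
       * ((1-q)*(1 + (u - 1) * T1))^k1 * (q*(1 + (u - 1) * T2))^k2 * P (k1+k2))"
    unfolding Gq_def Pq_def by (intro sum.cong refl) (simp add: power_mult_distrib mult_ac)
  also have "\<dots> = (\<Sum>k\<le>kmax. P k * ((1-q)*(1 + (u - 1) * T1) + q*(1 + (u - 1) * T2))^k)"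
    by (rule binom_box) (rule P_supp)
  also have "(1-q)*(1 + (u - 1) * T1) + q*(1 + (u - 1) * T2) = 1 + (u-1) * Tq q"
    by (simp add: Tq_def algebra_simps)
  finally show ?thesis by (simp add: G0_def)
qed

lemma nu_eq: "nu_tilde P kmax T1 T2 q = Tq q * mQ"
proof -
  define A where "A = (\<Sum>k1\<le>kmax. \<Sum>k2\<le>kmax. real k1 * Qq P kmax q k1 k2)"
  define B where "B = (\<Sum>k1\<le>kmax. \<Sum>k2\<le>kmax. real k2 * Qq P kmax q k1 k2)"
  have "A = (\<Sum>k\<le>kmax. \<Sum>i\<le>k. real i * Qq P kmax q i (k - i))"
    unfolding A_def by (rule box_tri) (simp add: Qq_def Q_supp)
  also have "\<dots> = (\<Sum>k\<le>kmax. Q k * (\<Sum>i\<le>k. real i * (real (k choose i) * (1-q)^i * q^(k-i))))"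
  proof (rule sum.cong[OF refl])
    fix k
    have "(\<Sum>i\<le>k. real i * Qq P kmax q i (k - i)) = (\<Sum>i\<le>k. Q k * (real i * (real (k choose i) * (1-q)^i * q^(k-i))))"
      by (rule sum.cong[OF refl]) (auto simp: Qq_def binomial_symmetric[symmetric] mult_ac)
    then show "(\<Sum>i\<le>k. real i * Qq P kmax q i (k - i)) = Q k * (\<Sum>i\<le>k. real i * (real (k choose i) * (1-q)^i * q^(k-i)))"
      by (simp add: sum_distrib_left)
  qed
  also have "\<dots> = (\<Sum>k\<le>kmax. Q k * (real k * (1-q)))"
    by (simp add: binom_mean)
  also have "\<dots> = (1-q) * mQ"
    by (simp add: mQ_def sum_distrib_left mult_ac)
  finally have hA: "A = (1-q) * mQ" .
  have "A + B = (\<Sum>k1\<le>kmax. \<Sum>k2\<le>kmax. real ((k1+k2) choose k2) * (1-q)^k1 * q^k2 * (real (k1+k2) * Q (k1+k2)))"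
    unfolding A_def B_def sum.distrib[symmetric]
    by (intro sum.cong refl) (simp add: Qq_def algebra_simps)
  also have "\<dots> = (\<Sum>k\<le>kmax. (real k * Q k) * ((1-q)+q)^k)"
    by (rule binom_box) (simp add: Q_supp)
  also have "\<dots> = mQ" by (simp add: mQ_def)
  finally have "B = q * mQ" using hA by (simp add: algebra_simps)
  moreover have "nu_tilde P kmax T1 T2 q = T1 * A + T2 * B"
    unfolding nu_tilde_def A_def B_def by simp
  ultimately show ?thesis using hA by (simp add: Tq_def algebra_simps)
qed

lemma one_minus_F0: "1 - F0 (1-s) = s * R s"
proof -
  have "1 - F0 (1-s) = (\<Sum>k\<le>kmax. Q k * (1 - (1-s)^k))"
    using Q_sum by (simp add: F0_def sum_subtractf right_diff_distrib)
  also have "\<dots> = (\<Sum>k\<le>kmax. s * (Q k * (\<Sum>j<k. (1-s)^j)))"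
    by (intro sum.cong refl) (simp add: one_diff_power_eq)
  finally show ?thesis by (simp add: R_def sum_distrib_left)
qed

lemma R_deriv: "(R has_real_derivative R' s) (at s)"
proof -
  have d: "((\<lambda>s. (1-s)^j) has_real_derivative (- (real j * (1-s)^(j - Suc 0)))) (at s)" for j
    by (auto intro!: derivative_eq_intros)
  show ?thesis
    unfolding R_def R'_def
    by (intro DERIV_sum DERIV_cmult d)
qed

lemma G0_deriv: "(G0 has_real_derivative G0' x) (at x)"
  unfolding G0_def G0'_def by (intro DERIV_sum DERIV_cmult DERIV_pow)

lemma R_isCont: "isCont R z" using R_deriv DERIV_isCont by blast

lemma R'_neg:
  assumes k: "2 \<le> k" "k \<le> kmax" "Q k > 0" and s: "0 \<le> s" "s \<le> 1"
  shows "R' s < 0"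
proof -
  have "R' s = - (\<Sum>k\<le>kmax. Q k * (\<Sum>j<k. real j * (1-s)^(j - Suc 0)))"
    by (simp add: R'_def sum_negf)
  moreover have "0 < (\<Sum>k\<le>kmax. Q k * (\<Sum>j<k. real j * (1-s)^(j - Suc 0)))"
  proof (rule sum_pos2[of _ k])
    show "0 < Q k * (\<Sum>j<k. real j * (1-s)^(j - Suc 0))"
    proof (rule mult_pos_pos[OF k(3)])
      show "0 < (\<Sum>j<k. real j * (1-s)^(j - Suc 0))"
        by (rule sum_pos2[of _ 1]) (use k s in auto)
    qed
    show "\<And>i. i \<in> {..kmax} \<Longrightarrow> 0 \<le> Q i * (\<Sum>j<i. real j * (1-s)^(j - Suc 0))"
      using s by (intro mult_nonneg_nonneg Q_nonneg sum_nonneg) auto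
  qed (use k in auto)
  ultimately show ?thesis by simp
qed

lemma G0'_pos: assumes "0 < x" shows "0 < G0' x"
proof -
  obtain k where k: "k \<le> kmax" "real k * P k > 0"
  proof -
    have "\<not> (\<forall>k\<in>{..kmax}. real k * P k \<le> 0)"
    proof
      assume "\<forall>k\<in>{..kmax}. real k * P k \<le> 0"
      then have "meandeg P kmax \<le> 0" unfolding meandeg_def by (intro sum_nonpos) auto
      with mean_pos show False by simp
    qed
    then show ?thesis using that by force
  qed
  show ?thesis unfolding G0'_def
  proof (rule sum_pos2[of _ k])
    show "0 < P k * (real k * x ^ (k - Suc 0))"
      using k assms by (simp add: mult.assoc[symmetric] mult.commute[of "P k"])
    show "\<And>i. i \<in> {..kmax} \<Longrightarrow> 0 \<le> P i * (real i * x ^ (i - Suc 0))"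
      using assms P_nonneg by (intro mult_nonneg_nonneg) auto
  qed (use k in auto)
qed

lemma char: "u = F0 (1 + (u-1)*T) \<longleftrightarrow> u = 1 \<or> T * R ((1-u)*T) = 1"
proof -
  have "F0 (1 + (u-1)*T) = 1 - (1-u)*T * R ((1-u)*T)"
    using one_minus_F0[of "(1-u)*T"] by (simp add: algebra_simps)
  then have "u = F0 (1 + (u-1)*T) \<longleftrightarrow> (1-u) * (1 - T * R ((1-u)*T)) = 0"
    by (auto simp: algebra_simps)
  then show ?thesis by auto
qed

lemma R_strict:
  assumes k: "2 \<le> k" "k \<le> kmax" "Q k > 0" and "0 \<le> s" "s < t" "t \<le> 1"
  shows "R t < R s"
  by (rule DERIV_neg_imp_decreasing[OF \<open>s < t\<close>]) (use assms R_deriv R'_neg in force)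

lemma R_inj:
  assumes k: "2 \<le> k" "k \<le> kmax" "Q k > 0"
  shows "inj_on R {0..1}"
proof (rule inj_onI, rule ccontr)
  fix x y assume xy: "x \<in> {0..1}" "y \<in> {0..1}" "R x = R y" "x \<noteq> y"
  show False
  proof (cases "x < y")
    case True then show ?thesis using R_strict[OF k, of x y] xy by auto
  next
    case False then show ?thesis using R_strict[OF k, of y x] xy by auto
  qed
qed

lemma fix_set:
  assumes k: "2 \<le> k" "k \<le> kmax" "Q k > 0"
    and T: "0 < T" "T < 1" and s: "0 < s" "s < 1" and eq: "T * R s = 1"
  shows "Inf (Fset T) = 1 - s/T"
proof -
  have "1 - F0 (1-s) \<le> 1" using F0_nonneg[of "1-s"] s by simp
  then have "s * R s \<le> 1" using one_minus_F0 by simp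
  then have "s * (T * R s) \<le> T" using T by (simp add: mult_left_mono mult.left_commute)
  then have sT: "s \<le> T" using eq by simp
  define u0 where "u0 = 1 - s/T"
  have u0: "0 \<le> u0" "u0 < 1" using sT T s by (auto simp: u0_def field_simps)
  have su: "(1-u0)*T = s" using T by (simp add: u0_def)
  have "Fset T = {u0, 1}"
  proof
    show "Fset T \<subseteq> {u0, 1}"
    proof
      fix u assume "u \<in> Fset T"
      then have u: "0 \<le> u" "u \<le> 1" "u = F0 (1 + (u-1)*T)" by (auto simp: Fset_def)
      show "u \<in> {u0, 1}"
      proof (cases "u = 1")
        case False
        then have "T * R ((1-u)*T) = 1" using u char by blast
        then have "T * R ((1-u)*T) = T * R s" using eq by simp
        then have "R ((1-u)*T) = R s" using T by simp
        moreover have "(1-u)*T \<in> {0..1}"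
        proof -
          have h1: "(1-u)*T \<le> 1*T" using u T by (intro mult_right_mono) auto
          have h2: "0 \<le> (1-u)*T" using u T by (intro mult_nonneg_nonneg) auto
          show ?thesis unfolding atLeastAtMost_iff using h1 h2 T by linarith
        qed
        moreover have "s \<in> {0..1}" using s by auto
        ultimately have "(1-u)*T = s" using R_inj[OF k] by (meson inj_onD)
        then have "1-u = s/T" using T by (simp add: eq_divide_eq)
        then have "u = u0" by (simp add: u0_def)
        then show ?thesis by simp
      qed simp
    qed
    show "{u0, 1} \<subseteq> Fset T"
      using u0 su eq char[of u0 T] char[of 1 T] by (auto simp: Fset_def)
  qed
  moreover have "Inf {u0, 1} = u0" using u0 by (simp add: cInf_insert inf_absorb1)
  ultimately show ?thesis by (simp add: u0_def)
qed

lemma psi_eq_Inf: "psi P kmax T1 T2 q = G0 (1 + (Inf (Fset (Tq q)) - 1) * Tq q)"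
  unfolding psi_def ustar_def Gq_eq Fq_eq Fset_def by simp

lemma psi_deriv:
  assumes T0pos: "0 < Tq q0" and T0lt: "Tq q0 < 1" and psi1: "psi P kmax T1 T2 q0 < 1"
  shows "\<exists>D>0. (psi P kmax T1 T2 has_real_derivative D) (at q0)"
proof -
  define T0 where "T0 = Tq q0"
  have T0: "0 < T0" "T0 < 1" using T0pos T0lt by (auto simp: T0_def)
  have ne: "1 \<in> Fset T0" using F0_1 by (simp add: Fset_def)
  have bdd: "bdd_below (Fset T0)" by (rule bdd_belowI[of _ 0]) (auto simp: Fset_def)
  have "Inf (Fset T0) \<le> 1" using cInf_lower[OF ne bdd] .
  moreover have "Inf (Fset T0) \<noteq> 1"
  proof
    assume "Inf (Fset T0) = 1"
    then have "psi P kmax T1 T2 q0 = 1" using G0_1 by (simp add: psi_eq_Inf T0_def)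
    with psi1 show False by simp
  qed
  ultimately have "Inf (Fset T0) < 1" by simp
  then obtain u0 where u0: "u0 \<in> Fset T0" "u0 < 1" using cInf_lessD ne by blast
  then have u0': "0 \<le> u0" "T0 * R ((1-u0)*T0) = 1" using char[of u0 T0] by (auto simp: Fset_def)
  define s0 where "s0 = (1-u0)*T0"
  have s0pos: "0 < s0" unfolding s0_def using u0 T0 by simp
  have "s0 \<le> 1*T0" unfolding s0_def using u0' T0 by (intro mult_right_mono) auto
  then have s0lt: "s0 < 1" using T0 by simp
  have Rs0: "T0 * R s0 = 1" using u0' by (simp add: s0_def)
  have "\<exists>k. 2 \<le> k \<and> k \<le> kmax \<and> Q k > 0"
  proof (rule ccontr)
    assume nk: "\<not> (\<exists>k. 2 \<le> k \<and> k \<le> kmax \<and> Q k > 0)"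
    have "R s0 \<le> (\<Sum>k\<le>kmax. Q k)" unfolding R_def
    proof (rule sum_mono)
      fix k assume kk: "k \<in> {..kmax}"
      show "Q k * (\<Sum>j<k. (1-s0)^j) \<le> Q k"
      proof (cases "2 \<le> k")
        case True
        then have "Q k = 0" using nk Q_nonneg[of k] kk by force
        then show ?thesis by simp
      next
        case False
        then have "k = 0 \<or> k = 1" by auto
        then show ?thesis using Q_nonneg[of k] by auto
      qed
    qed
    then have "R s0 \<le> 1" using Q_sum by simp
    then have "T0 * R s0 \<le> T0 * 1" using T0 by (intro mult_left_mono) auto
    then show False using Rs0 T0 by simp
  qed
  then obtain k where k: "2 \<le> k" "k \<le> kmax" "Q k > 0" by blast
  define d where "d = min s0 (1-s0) / 2"
  have m0: "0 < min s0 (1-s0)" using s0pos s0lt by simp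
  have mm: "min s0 (1-s0) \<le> s0" "min s0 (1-s0) \<le> 1-s0" by simp_all
  have d1: "0 < d" unfolding d_def using m0 by simp
  have d23: "0 < s0 - d \<and> s0 + d < 1" unfolding d_def using aux_min[OF m0 mm] .
  have d2: "0 < s0 - d" using d23 by simp
  have d3: "s0 + d < 1" using d23 by simp
  note d = d1 d2 d3
  define Rinv where "Rinv = the_inv_into {0..1} R"
  have inj: "inj_on R {0..1}" by (rule R_inj[OF k])
  have Rinv_R: "\<And>z. z \<in> {0..1} \<Longrightarrow> Rinv (R z) = z"
    unfolding Rinv_def using the_inv_into_f_f[OF inj] by blast
  define a where "a = R (s0+d)"
  define b where "b = R (s0-d)"
  have ab: "a < R s0" "R s0 < b"
    unfolding a_def b_def using R_strict[OF k] d s0pos s0lt by auto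
  have inv_ok: "R (Rinv y) = y \<and> \<bar>Rinv y - s0\<bar> \<le> d" if y: "a < y" "y < b" for y
  proof -
    obtain z where z: "s0-d \<le> z" "z \<le> s0+d" "R z = y"
      using IVT2[of R "s0+d" y "s0-d"] R_isCont y d unfolding a_def b_def by force
    then have "z \<in> {0..1}" using d by auto
    then have "Rinv y = z" using Rinv_R z(3) by blast
    then show ?thesis using z by auto
  qed
  have cont: "isCont Rinv (R s0)"
  proof (rule isCont_inverse_function[where d=d and f=R and g=Rinv and x=s0])
    show "0 < d" using d by simp
  next
    fix z assume "\<bar>z - s0\<bar> \<le> d"
    then have "z \<in> {0..1}" using d by (auto simp: abs_le_iff)
    then show "Rinv (R z) = z" by (rule Rinv_R)
  next
    fix z show "isCont R z" by (rule R_isCont)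
  qed
  have R's0: "R' s0 < 0" using R'_neg[OF k] s0pos s0lt by simp
  have Rinv_s0: "Rinv (R s0) = s0" using Rinv_R s0pos s0lt by simp
  have dRinv: "DERIV Rinv (R s0) :> inverse (R' s0)"
  proof (rule DERIV_inverse_function[where a=a and b=b])
    show "DERIV R (Rinv (R s0)) :> R' s0" unfolding Rinv_s0 by (rule R_deriv)
  qed (use R's0 ab inv_ok cont in auto)
  have y0: "R s0 = inverse T0" using Rs0 T0 by (simp add: field_simps)
  have dTq: "DERIV Tq q0 :> T2 - T1" unfolding Tq_def by (auto intro!: derivative_eq_intros)
  define D1 where "D1 = - ((T2 - T1) * inverse (T0 ^ Suc (Suc 0)))"
  have dInvT: "DERIV (\<lambda>q. inverse (Tq q)) q0 :> D1"
    unfolding D1_def T0_def by (rule DERIV_inverse_fun[OF dTq]) (use T0 T0_def in simp)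
  have D1pos: "0 < D1"
  proof -
    have "0 < inverse (T0 ^ Suc (Suc 0))" using T0 by simp
    then have "(T2 - T1) * inverse (T0 ^ Suc (Suc 0)) < 0" using T21 by (simp add: mult_neg_pos)
    then show ?thesis by (simp add: D1_def)
  qed
  have d3: "DERIV (\<lambda>q. Rinv (inverse (Tq q))) q0 :> inverse (R' s0) * D1"
    by (rule DERIV_chain2[OF _ dInvT]) (use dRinv y0 T0_def in simp)
  have dg: "DERIV (\<lambda>x. G0 (1 - x)) s0 :> G0' (1 - s0) * (-1)"
    by (rule DERIV_chain2[OF G0_deriv]) (auto intro!: derivative_eq_intros)
  have Rinv_q0: "Rinv (inverse (Tq q0)) = s0" using Rinv_s0 y0 T0_def by simp
  define f where "f = (\<lambda>q. G0 (1 - Rinv (inverse (Tq q))))"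
  define D where "D = G0' (1 - s0) * (-1) * (inverse (R' s0) * D1)"
  have df: "DERIV f q0 :> D"
    unfolding f_def D_def by (rule DERIV_chain2[OF _ d3]) (use dg Rinv_q0 in simp)
  have G'pos: "0 < G0' (1 - s0)" using G0'_pos s0lt by simp
  have Dpos: "0 < D" unfolding D_def
  proof -
    have "inverse (R' s0) * D1 < 0" using R's0 D1pos by (simp add: mult_neg_pos)
    moreover have "G0' (1 - s0) * (-1) < 0" using G'pos by simp
    ultimately show "0 < G0' (1 - s0) * (-1) * (inverse (R' s0) * D1)"
      using mult_neg_neg by blast
  qed
  define cond where "cond = (\<lambda>q. 0 < Tq q \<and> Tq q < 1 \<and> a < inverse (Tq q) \<and> inverse (Tq q) < b)"
  have eqf: "psi P kmax T1 T2 q = f q" if cq: "cond q" for q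
  proof -
    define s where "s = Rinv (inverse (Tq q))"
    have hs: "R s = inverse (Tq q)" "\<bar>s - s0\<bar> \<le> d" using inv_ok cq unfolding s_def cond_def by auto
    have s01: "0 < s" "s < 1" using hs d by auto
    have "Tq q * R s = 1" using hs cq by (simp add: cond_def)
    then have "Inf (Fset (Tq q)) = 1 - s / Tq q"
      using fix_set[OF k, of "Tq q" s] cq s01 by (simp add: cond_def)
    then have "1 + (Inf (Fset (Tq q)) - 1) * Tq q = 1 - s" using cq by (simp add: cond_def)
    then have "psi P kmax T1 T2 q = G0 (1 - s)" by (simp add: psi_eq_Inf)
    then show ?thesis by (simp add: f_def s_def)
  qed
  have cq0: "cond q0" unfolding cond_def using T0 ab y0 by (simp add: T0_def)
  have limT: "(Tq \<longlongrightarrow> T0) (at q0)" using DERIV_isCont[OF dTq] by (simp add: isCont_def T0_def)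
  have limI: "((\<lambda>q. inverse (Tq q)) \<longlongrightarrow> inverse T0) (at q0)"
    using tendsto_inverse[OF limT] T0 by simp
  have e1: "eventually (\<lambda>q. 0 < Tq q) (at q0)" using order_tendstoD(1)[OF limT] T0 by blast
  have e2: "eventually (\<lambda>q. Tq q < 1) (at q0)" using order_tendstoD(2)[OF limT] T0 by blast
  have e3: "eventually (\<lambda>q. a < inverse (Tq q)) (at q0)" using order_tendstoD(1)[OF limI] ab y0 by simp
  have e4: "eventually (\<lambda>q. inverse (Tq q) < b) (at q0)" using order_tendstoD(2)[OF limI] ab y0 by simp
  have "eventually cond (at q0)" unfolding cond_def
    using eventually_conj[OF e1 eventually_conj[OF e2 eventually_conj[OF e3 e4]]] by simp
  then obtain e where e: "e > 0" "\<And>x. x \<noteq> q0 \<Longrightarrow> dist x q0 < e \<Longrightarrow> cond x"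
    unfolding eventually_at by auto
  have "(psi P kmax T1 T2 has_real_derivative D) (at q0 within UNIV)"
  proof (rule has_field_derivative_transform_within[OF _ e(1)])
    show "(f has_real_derivative D) (at q0 within UNIV)" using df by simp
    show "\<And>x. x \<in> UNIV \<Longrightarrow> dist x q0 < e \<Longrightarrow> f x = psi P kmax T1 T2 x"
      using eqf e cq0 by (metis)
  qed simp
  then show ?thesis using Dpos by auto
qed

end

theorem theorem2:
  fixes P :: "nat \<Rightarrow> real" and kmax :: nat and T1 T2 :: real
  assumes P_nonneg: "\<And>k. P k \<ge> 0"
    and P_supp: "\<And>k. k > kmax \<Longrightarrow> P k = 0"
    and P_sum: "(\<Sum>k\<le>kmax. P k) = 1"
    and mean_pos: "meandeg P kmax > 0"
    and T2_pos: "0 < T2" and T21: "T2 < T1" and T1_lt: "T1 < 1"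
    and Qmean_pos: "(\<Sum>m\<le>kmax. real m * Qd P kmax m) > 0"
  shows "(\<forall>q\<in>{0..1}. 0 < psi P kmax T1 T2 q \<and> psi P kmax T1 T2 q < 1 \<longrightarrow>
            (\<exists>D. (psi P kmax T1 T2 has_real_derivative D) (at q within {0..1}) \<and> D > 0))
       \<and> (\<forall>q\<in>{0..1}. \<exists>D. (nu_tilde P kmax T1 T2 has_real_derivative D) (at q within {0..1}) \<and> D < 0)"
proof -
  interpret t: thm2 P kmax T1 T2
    by unfold_locales (use assms in auto)
  have part1: "\<exists>D. (psi P kmax T1 T2 has_real_derivative D) (at q within {0..1}) \<and> D > 0"
    if q: "q \<in> {0..1}" "psi P kmax T1 T2 q < 1" for q
  proof -
    have h1: "q*(T1-T2) \<le> 1*(T1-T2)" using q T21 by (intro mult_right_mono) auto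
    have h2: "0 \<le> q*(T1-T2)" using q T21 by (intro mult_nonneg_nonneg) auto
    have "t.Tq q = T1 - q*(T1-T2)" by (simp add: t.Tq_def algebra_simps)
    then have "0 < t.Tq q" using h1 h2 T2_pos T1_lt by (smt (verit))
    moreover have "t.Tq q < 1" using \<open>t.Tq q = T1 - q*(T1-T2)\<close> h1 h2 T2_pos T1_lt by (smt (verit))
    ultimately have "0 < t.Tq q" "t.Tq q < 1" by auto
    then obtain D where "D > 0" "(psi P kmax T1 T2 has_real_derivative D) (at q)"
      using t.psi_deriv q by blast
    then show ?thesis using has_field_derivative_at_within by blast
  qed
  have nu: "nu_tilde P kmax T1 T2 = (\<lambda>q. t.Tq q * t.mQ)" using t.nu_eq by auto
  have part2: "\<exists>D. (nu_tilde P kmax T1 T2 has_real_derivative D) (at q within {0..1}) \<and> D < 0" for q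
  proof -
    have "((\<lambda>q. t.Tq q * t.mQ) has_real_derivative (T2 - T1) * t.mQ) (at q within {0..1})"
      unfolding t.Tq_def by (auto intro!: derivative_eq_intros simp: algebra_simps)
    moreover have "(T2 - T1) * t.mQ < 0" using Qmean_pos T21 by (simp add: t.mQ_def mult_neg_pos)
    ultimately show ?thesis unfolding nu by blast
  qed
  show ?thesis using part1 part2 by blast
qed

end
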